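(* Suppose that a germ $\hat\varphi\in\mathbb{C}\{\zeta\}$ can be analytically continued along a path $\gamma:[0,t_*]\to\mathbb{C}$ belonging to $\Pi$, and let $F$ be a finite subset of $\mathbb{C}$. Then for each $\varepsilon>0$ there exists a path $\gamma^*:[0,t_*]\to\mathbb{C}$ belonging to $\Pi$ such that: $\gamma^*((0,t_* ))\subset\mathbb{C}\setminus F$; $L(\gamma^* )<L(\gamma)+\varepsilon$; $\gamma^*(t_* )=\gamma(t_* )$, the germ $\hat\varphi$ can be analytically continued along $\gamma^*$, and the analytic continuations of $\hat\varphi$ along $\gamma$ and along $\gamma^*$ coincide.
   Context: $\Pi$ denotes the set of all Lipschitz paths $\gamma:[0,t_*]\to\mathbb{C}$, with some real $t_*\ge0$ depending on $\gamma$, such that $\gamma(0)=0$. $L(\gamma)$ denotes the length of a path $\gamma$. *)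

theory Defs
  imports "HOL-Analysis.Analysis"
begin

definition in_Pi :: "(real \<Rightarrow> complex) \<Rightarrow> real \<Rightarrow> bool" where
  "in_Pi \<gamma> T \<longleftrightarrow> 0 \<le> T \<and> (\<exists>C. C-lipschitz_on {0..T} \<gamma>) \<and> \<gamma> 0 = 0"

definition path_len :: "(real \<Rightarrow> complex) \<Rightarrow> real \<Rightarrow> real" where
  "path_len \<gamma> T = (SUP p \<in> {(n, t). (n::nat) > 0 \<and> t 0 = (0::real) \<and> t n = T \<and>
        (\<forall>i<n. t i \<le> t (Suc i))}.
      (\<Sum>i<fst p. norm (\<gamma> (snd p (Suc i)) - \<gamma> (snd p i))))"

text \<open>Analytic continuation of the germ at 0 of phi along gamma on [0,T], ending with the
  germ at gamma T of psi: a family of holomorphic function elements (f t, disc of radius r t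
  around gamma t), locally compatible along the path, starting with the germ of phi and
  ending with the germ of psi.\<close>
definition ac_along ::
  "(complex \<Rightarrow> complex) \<Rightarrow> (real \<Rightarrow> complex) \<Rightarrow> real \<Rightarrow> (complex \<Rightarrow> complex) \<Rightarrow> bool" where
  "ac_along \<phi> \<gamma> T \<psi> \<longleftrightarrow>
     (\<exists>f :: real \<Rightarrow> complex \<Rightarrow> complex. \<exists>r :: real \<Rightarrow> real.
        (\<forall>t\<in>{0..T}. 0 < r t \<and> f t holomorphic_on ball (\<gamma> t) (r t)) \<and>
        (\<forall>t\<in>{0..T}. \<exists>\<delta>>0. \<forall>s\<in>{0..T}. \<bar>s - t\<bar> < \<delta> \<longrightarrow>
            \<gamma> s \<in> ball (\<gamma> t) (r t) \<and> (\<forall>\<^sub>F z in nhds (\<gamma> s). f s z = f t z)) \<and>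
        (\<forall>\<^sub>F z in nhds (\<gamma> 0). f 0 z = \<phi> z) \<and>
        (\<forall>\<^sub>F z in nhds (\<gamma> T). f T z = \<psi> z))"

end

theory Submission
  imports Defs "HOL-Complex_Analysis.Complex_Analysis"
begin

lemma ident_balls:
  fixes f g :: "complex \<Rightarrow> complex"
  assumes "f holomorphic_on ball a r" "g holomorphic_on ball b s"
    "z0 \<in> ball a r \<inter> ball b s" "\<forall>\<^sub>F z in nhds z0. f z = g z" "z \<in> ball a r \<inter> ball b s"
  shows "f z = g z"
proof -
  obtain U where U: "open U" "z0 \<in> U" "\<And>z. z \<in> U \<Longrightarrow> f z = g z"
    using assms(4) unfolding eventually_nhds by blast
  show ?thesis
  proof (rule analytic_continuation_open[of "U \<inter> (ball a r \<inter> ball b s)" "ball a r \<inter> ball b s" f g])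
    show "connected (ball a r \<inter> ball b s)"
      by (intro convex_connected convex_Int convex_ball)
    show "f holomorphic_on ball a r \<inter> ball b s" using assms(1) holomorphic_on_subset by blast
    show "g holomorphic_on ball a r \<inter> ball b s" using assms(2) holomorphic_on_subset by blast
  qed (use U assms(3,5) in auto)
qed

lemma stab:
  fixes \<gamma> :: "real \<Rightarrow> complex"
  assumes ac: "ac_along \<phi> \<gamma> T \<psi>" and T0: "0 \<le> T" and cont: "continuous_on {0..T} \<gamma>"
  obtains \<eta> where "\<eta> > 0" "\<And>\<gamma>'. continuous_on {0..T} \<gamma>' \<Longrightarrow> \<gamma>' 0 = \<gamma> 0 \<Longrightarrow> \<gamma>' T = \<gamma> T \<Longrightarrow>
     (\<forall>s\<in>{0..T}. norm (\<gamma>' s - \<gamma> s) < \<eta>) \<Longrightarrow> ac_along \<phi> \<gamma>' T \<psi>"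
proof -
  obtain f r where hol: "\<forall>t\<in>{0..T}. 0 < r t \<and> f t holomorphic_on ball (\<gamma> t) (r t)"
    and comp: "\<forall>t\<in>{0..T}. \<exists>\<delta>>0. \<forall>s\<in>{0..T}. \<bar>s - t\<bar> < \<delta> \<longrightarrow>
            \<gamma> s \<in> ball (\<gamma> t) (r t) \<and> (\<forall>\<^sub>F z in nhds (\<gamma> s). f s z = f t z)"
    and st: "\<forall>\<^sub>F z in nhds (\<gamma> 0). f 0 z = \<phi> z" and en: "\<forall>\<^sub>F z in nhds (\<gamma> T). f T z = \<psi> z"
    using ac unfolding ac_along_def by blast
  obtain \<delta> where \<delta>: "\<And>t. t\<in>{0..T} \<Longrightarrow> \<delta> t > 0 \<and> (\<forall>s\<in>{0..T}. \<bar>s - t\<bar> < \<delta> t \<longrightarrow>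
            \<gamma> s \<in> ball (\<gamma> t) (r t) \<and> (\<forall>\<^sub>F z in nhds (\<gamma> s). f s z = f t z))"
    using comp by metis
  have cpt: "compact {0..T::real}" by simp
  have cov0: "{0..T} \<subseteq> (\<Union>t\<in>{0..T}. ball t (\<delta> t / 4))"
  proof
    fix x :: real assume x: "x \<in> {0..T}"
    then have "x \<in> ball x (\<delta> x / 4)" using \<delta>[OF x] by simp
    then show "x \<in> (\<Union>t\<in>{0..T}. ball t (\<delta> t / 4))" using x by blast
  qed
  obtain I where I: "I \<subseteq> {0..T}" "finite I" and cov: "{0..T} \<subseteq> (\<Union>t\<in>I. ball t (\<delta> t / 4))"
    by (rule compactE_image[OF cpt _ cov0]) auto
  have Ine: "I \<noteq> {}" using cov T0 by auto
  have "\<exists>m>0. \<forall>s\<in>{0..T}. \<bar>s - t\<bar> \<le> \<delta> t / 2 \<longrightarrow> ball (\<gamma> s) m \<subseteq> ball (\<gamma> t) (r t)" if t: "t \<in> I" for t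
  proof -
    have tT: "t \<in> {0..T}" using t I by auto
    have K1: "compact (\<gamma> ` ({0..T} \<inter> cball t (\<delta> t / 2)))"
      by (intro compact_continuous_image continuous_on_subset[OF cont] compact_Int_closed) auto
    have K2: "\<gamma> ` ({0..T} \<inter> cball t (\<delta> t / 2)) \<subseteq> ball (\<gamma> t) (r t)"
    proof
      fix z assume "z \<in> \<gamma> ` ({0..T} \<inter> cball t (\<delta> t / 2))"
      then obtain s where s: "s \<in> {0..T}" "dist t s \<le> \<delta> t / 2" "z = \<gamma> s" by auto
      have "\<delta> t > 0" using \<delta>[OF tT] by simp
      moreover have "\<bar>s - t\<bar> \<le> \<delta> t / 2" using s(2) by (simp add: dist_real_def abs_minus_commute)
      ultimately have "\<bar>s - t\<bar> < \<delta> t" by linarith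
      then show "z \<in> ball (\<gamma> t) (r t)" using \<delta>[OF tT] s by auto
    qed
    obtain e where e: "e > 0" "(\<Union>x\<in>\<gamma> ` ({0..T} \<inter> cball t (\<delta> t / 2)). ball x e) \<subseteq> ball (\<gamma> t) (r t)"
      by (rule compact_subset_open_imp_ball_epsilon_subset[OF K1 open_ball K2])
    show ?thesis
    proof (intro exI[of _ e] conjI ballI impI)
      show "0 < e" by (rule e(1))
      fix s assume s: "s \<in> {0..T}" "\<bar>s - t\<bar> \<le> \<delta> t / 2"
      then have "\<gamma> s \<in> \<gamma> ` ({0..T} \<inter> cball t (\<delta> t / 2))"
        by (simp add: dist_real_def abs_minus_commute)
      then show "ball (\<gamma> s) e \<subseteq> ball (\<gamma> t) (r t)" using e(2) by blast
    qed
  qed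
  then obtain m where m: "\<And>t. t \<in> I \<Longrightarrow> m t > 0 \<and> (\<forall>s\<in>{0..T}. \<bar>s - t\<bar> \<le> \<delta> t / 2 \<longrightarrow> ball (\<gamma> s) (m t) \<subseteq> ball (\<gamma> t) (r t))"
    by metis
  define \<eta> where "\<eta> = Min (m ` I)"
  define \<delta>0 where "\<delta>0 = Min ((\<lambda>t. \<delta> t / 4) ` I)"
  have \<eta>pos: "\<eta> > 0" unfolding \<eta>_def using I Ine m by (subst Min_gr_iff) auto
  have \<eta>le: "\<eta> \<le> m t" if "t \<in> I" for t unfolding \<eta>_def using I that by (intro Min_le) auto
  have \<delta>0pos: "\<delta>0 > 0" unfolding \<delta>0_def using I Ine \<delta> by (subst Min_gr_iff) auto
  have \<delta>0le: "\<delta>0 \<le> \<delta> t / 4" if "t \<in> I" for t unfolding \<delta>0_def using I that by (intro Min_le) auto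
  show ?thesis
  proof (rule that[OF \<eta>pos])
    fix \<gamma>' :: "real \<Rightarrow> complex"
    assume cont': "continuous_on {0..T} \<gamma>'" and e0: "\<gamma>' 0 = \<gamma> 0" and eT: "\<gamma>' T = \<gamma> T"
      and close: "\<forall>s\<in>{0..T}. norm (\<gamma>' s - \<gamma> s) < \<eta>"
    define \<tau> where "\<tau> s = (SOME t. t \<in> I \<and> \<bar>s - t\<bar> < \<delta> t / 4)" for s
    have \<tau>: "\<tau> s \<in> I \<and> \<bar>s - \<tau> s\<bar> < \<delta> (\<tau> s) / 4" if "s \<in> {0..T}" for s
    proof -
      have "\<exists>t. t \<in> I \<and> \<bar>s - t\<bar> < \<delta> t / 4" using cov that by (force simp: dist_real_def abs_minus_commute)
      then show ?thesis unfolding \<tau>_def by (rule someI_ex)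
    qed
    define r' where "r' s = \<eta> - norm (\<gamma>' s - \<gamma> s)" for s
    have r'pos: "r' s > 0" if "s \<in> {0..T}" for s using close that by (auto simp: r'_def)
    have D: "ball (\<gamma>' s) (r' s) \<subseteq> ball (\<gamma> (\<tau> s)) (r (\<tau> s))" if s: "s \<in> {0..T}" for s
    proof
      fix z assume "z \<in> ball (\<gamma>' s) (r' s)"
      then have "dist (\<gamma> s) z < \<eta>" unfolding r'_def
        using dist_triangle[of "\<gamma> s" z "\<gamma>' s"] by (simp add: dist_norm norm_minus_commute)
      then have "z \<in> ball (\<gamma> s) (m (\<tau> s))" using \<eta>le[of "\<tau> s"] \<tau>[OF s] by auto
      moreover have "\<bar>s - \<tau> s\<bar> \<le> \<delta> (\<tau> s) / 2" using \<tau>[OF s] \<delta>[of "\<tau> s"] I by force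
      ultimately show "z \<in> ball (\<gamma> (\<tau> s)) (r (\<tau> s))" using m[of "\<tau> s"] \<tau>[OF s] s by blast
    qed
    have \<tau>T: "\<tau> s \<in> {0..T}" if "s \<in> {0..T}" for s using \<tau>[OF that] I by auto
    show "ac_along \<phi> \<gamma>' T \<psi>"
      unfolding ac_along_def
    proof (intro exI[of _ "\<lambda>s. f (\<tau> s)"] exI[of _ r'] conjI ballI)
      fix t assume t: "t \<in> {0..T}"
      show "0 < r' t" using r'pos[OF t] .
      show "f (\<tau> t) holomorphic_on ball (\<gamma>' t) (r' t)"
        using hol \<tau>T[OF t] D[OF t] holomorphic_on_subset by blast
    next
      fix t assume t: "t \<in> {0..T}"
      obtain d where d: "d > 0" "\<And>s. s \<in> {0..T} \<Longrightarrow> dist s t < d \<Longrightarrow> dist (\<gamma>' s) (\<gamma>' t) < r' t"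
        using cont' t r'pos[OF t] unfolding continuous_on_iff by metis
      show "\<exists>\<delta>>0. \<forall>s\<in>{0..T}. \<bar>s - t\<bar> < \<delta> \<longrightarrow> \<gamma>' s \<in> ball (\<gamma>' t) (r' t) \<and>
              (\<forall>\<^sub>F z in nhds (\<gamma>' s). f (\<tau> s) z = f (\<tau> t) z)"
      proof (intro exI[of _ "min d \<delta>0"] conjI ballI impI)
        show "0 < min d \<delta>0" using d \<delta>0pos by simp
        fix s assume s: "s \<in> {0..T}" and st: "\<bar>s - t\<bar> < min d \<delta>0"
        show sb: "\<gamma>' s \<in> ball (\<gamma>' t) (r' t)"
          using d(2)[OF s] st by (simp add: dist_real_def dist_commute)
        define a where "a = \<tau> s"
        define b where "b = \<tau> t"
        have aI: "a \<in> I" and bI: "b \<in> I" using \<tau> s t by (auto simp: a_def b_def)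
        have aT: "a \<in> {0..T}" and bT: "b \<in> {0..T}" using aI bI I by auto
        have "\<bar>t - a\<bar> < \<delta> a"
        proof -
          have "\<bar>t - a\<bar> \<le> \<bar>t - s\<bar> + \<bar>s - a\<bar>" by linarith
          also have "\<dots> < \<delta>0 + \<delta> a / 4" using st \<tau>[OF s] unfolding a_def by linarith
          also have "\<dots> \<le> \<delta> a / 2" using \<delta>0le[OF aI] by linarith
          also have "\<dots> < \<delta> a" using \<delta>[OF aT] by linarith
          finally show ?thesis .
        qed
        then have ta: "\<gamma> t \<in> ball (\<gamma> a) (r a)" "\<forall>\<^sub>F z in nhds (\<gamma> t). f t z = f a z"
          using \<delta>[OF aT] t by auto
        have "\<bar>t - b\<bar> < \<delta> b" using \<tau>[OF t] \<delta>[OF bT] unfolding b_def by linarith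
        then have tb: "\<gamma> t \<in> ball (\<gamma> b) (r b)" "\<forall>\<^sub>F z in nhds (\<gamma> t). f t z = f b z"
          using \<delta>[OF bT] t by auto
        have eqab: "f a z = f b z" if "z \<in> ball (\<gamma> a) (r a) \<inter> ball (\<gamma> b) (r b)" for z
        proof (rule ident_balls[OF _ _ _ _ that])
          show "f a holomorphic_on ball (\<gamma> a) (r a)" using hol aT by blast
          show "f b holomorphic_on ball (\<gamma> b) (r b)" using hol bT by blast
          show "\<gamma> t \<in> ball (\<gamma> a) (r a) \<inter> ball (\<gamma> b) (r b)" using ta tb by auto
          show "\<forall>\<^sub>F z in nhds (\<gamma> t). f a z = f b z"
            using eventually_conj[OF ta(2) tb(2)] by (rule eventually_mono) auto
        qed
        have "\<gamma>' s \<in> ball (\<gamma> a) (r a)" using D[OF s] r'pos[OF s] unfolding a_def by (meson centre_in_ball mem_ball subsetD)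
        moreover have "\<gamma>' s \<in> ball (\<gamma> b) (r b)" using D[OF t] sb unfolding b_def by auto
        ultimately show "\<forall>\<^sub>F z in nhds (\<gamma>' s). f (\<tau> s) z = f (\<tau> t) z"
          unfolding eventually_nhds a_def[symmetric] b_def[symmetric]
          by (intro exI[of _ "ball (\<gamma> a) (r a) \<inter> ball (\<gamma> b) (r b)"]) (auto intro: eqab)
      qed
    next
      have z: "0 \<in> {0..T}" using T0 by simp
      have "\<bar>0 - \<tau> 0\<bar> < \<delta> (\<tau> 0)" using \<tau>[OF z] \<delta>[OF \<tau>T[OF z]] by linarith
      then have ev0: "\<forall>\<^sub>F z in nhds (\<gamma> 0). f 0 z = f (\<tau> 0) z" using \<delta>[OF \<tau>T[OF z]] z by blast
      show "\<forall>\<^sub>F z in nhds (\<gamma>' 0). f (\<tau> 0) z = \<phi> z"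
        unfolding e0 by (rule eventually_mono[OF eventually_conj[OF st ev0]]) auto
    next
      have z: "T \<in> {0..T}" using T0 by simp
      have "\<bar>T - \<tau> T\<bar> < \<delta> (\<tau> T)" using \<tau>[OF z] \<delta>[OF \<tau>T[OF z]] by linarith
      then have ev0: "\<forall>\<^sub>F z in nhds (\<gamma> T). f T z = f (\<tau> T) z" using \<delta>[OF \<tau>T[OF z]] z by blast
      show "\<forall>\<^sub>F z in nhds (\<gamma>' T). f (\<tau> T) z = \<psi> z"
        unfolding eT by (rule eventually_mono[OF eventually_conj[OF en ev0]]) auto
    qed
  qed
qed

lemma avoid:
  fixes \<gamma> :: "real \<Rightarrow> complex"
  assumes lip: "C-lipschitz_on {0..T} \<gamma>" and fin: "finite F" and \<rho>: "\<rho> > 0"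
  obtains c where "norm c < \<rho>" "\<And>t. t \<in> {0<..<T} \<Longrightarrow> \<gamma> t + c * of_real (t*(T-t)) \<notin> F"
proof -
  have C0: "C \<ge> 0" using lip lipschitz_on_nonneg by blast
  define S where "S = {x::complex. Im x = 0 \<and> 0 < Re x \<and> Re x < T}"
  define g where "g p x = (p - \<gamma> (Re x)) / of_real (Re x * (T - Re x))" for p x
  have negS: "negligible S"
  proof (rule negligible_subset[OF negligible_standard_hyperplane[of \<i> 0]])
    show "\<i> \<in> (Basis :: complex set)" by (simp add: Basis_complex_def)
    show "S \<subseteq> {x. x \<bullet> \<i> = 0}" by (auto simp: S_def inner_complex_def)
  qed
  have negp: "negligible (g p ` S)" for p
  proof (rule negligible_locally_Lipschitz_image[OF _ negS])
    show "DIM(complex) \<le> DIM(complex)" by simp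
    fix x assume x: "x \<in> S"
    define t where "t = Re x"
    define W where "W = {z::complex. t/2 < Re z \<and> Re z < (t+T)/2}"
    define b where "b = p - \<gamma> t"
    define v where "v = t*(T-t)"
    define m where "m = (t/2)*((T-t)/2)"
    have t: "0 < t" "t < T" using x by (auto simp: S_def t_def)
    have vpos: "v > 0" and mpos: "m > 0" using t by (auto simp: v_def m_def)
    have "open W" unfolding W_def
      by (intro open_Collect_conj open_Collect_less continuous_intros)
    moreover have "x \<in> W" using t by (auto simp: W_def t_def)
    moreover have "norm (g p y - g p x) \<le> ((C * v + norm b*T)/(m * v)) * norm (y - x)"
      if y: "y \<in> S \<inter> W" for y
    proof -
      define s where "s = Re y"
      define u where "u = s*(T-s)"
      define a where "a = p - \<gamma> s"
      have s: "0 < s" "s < T" "t/2 < s" "s < (t+T)/2" using y by (auto simp: S_def W_def s_def)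
      have um: "m \<le> u" unfolding m_def u_def using s t
        by (intro mult_mono) auto
      have upos: "u > 0" using um mpos by linarith
      have gen: "A/U - B/V = ((A - B)*V + B*(V - U))/(U*V)" if "U \<noteq> 0" "V \<noteq> 0" for A B U V :: complex
        using that by (simp add: field_simps)
      have eq: "g p y - g p x = ((a - b) * of_real v + b * of_real (v - u)) / of_real (u * v)"
      proof -
        have "g p y = a / of_real u" by (simp add: g_def a_def s_def u_def)
        moreover have "g p x = b / of_real v" by (simp add: g_def b_def t_def v_def)
        ultimately show ?thesis using gen[of "of_real u" "of_real v" a b] upos vpos
          by (simp only: of_real_diff of_real_mult) simp
      qed
      have st: "\<bar>s - t\<bar> \<le> norm (y - x)"
        using abs_Re_le_cmod[of "y - x"] by (simp add: s_def t_def)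
      have ab: "norm (a - b) \<le> C * \<bar>s - t\<bar>"
        using lipschitz_onD[OF lip, of t s] s t by (simp add: a_def b_def dist_norm dist_real_def norm_minus_commute abs_minus_commute)
      have vu: "\<bar>v - u\<bar> \<le> T * \<bar>s - t\<bar>"
      proof -
        have "v - u = (s - t) * (s + t - T)" by (simp add: u_def v_def algebra_simps)
        then have "\<bar>v - u\<bar> = \<bar>s - t\<bar> * \<bar>s + t - T\<bar>" by (simp add: abs_mult)
        also have "\<dots> \<le> \<bar>s - t\<bar> * T" using s t by (intro mult_left_mono) auto
        finally show ?thesis by (simp add: mult.commute)
      qed
      have num: "norm ((a - b) * of_real v + b * of_real (v - u)) \<le> (C * v + norm b*T) * norm (y - x)"
      proof -
        have "norm ((a - b) * of_real v + b * of_real (v - u)) \<le> norm (a - b) * v + norm b * \<bar>v - u\<bar>"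
          using norm_triangle_ineq[of "(a - b) * of_real v" "b * of_real (v - u)"] vpos
          by (simp only: norm_mult norm_of_real)
        also have "\<dots> \<le> (C * \<bar>s - t\<bar>) * v + norm b * (T * \<bar>s - t\<bar>)"
          using ab vu vpos C0 by (intro add_mono mult_mono mult_left_mono) auto
        also have "\<dots> = (C * v + norm b*T) * \<bar>s - t\<bar>" by (simp add: algebra_simps)
        also have "\<dots> \<le> (C * v + norm b*T) * norm (y - x)"
          using st C0 vpos t by (intro mult_left_mono) auto
        finally show ?thesis .
      qed
      have "norm (g p y - g p x) = norm ((a - b) * of_real v + b * of_real (v - u)) / (u * v)"
        unfolding eq using upos vpos by (simp add: norm_divide norm_mult)
      also have "\<dots> \<le> (C * v + norm b*T) * norm (y - x) / (u * v)"
        using num upos vpos by (intro divide_right_mono) auto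
      also have "\<dots> \<le> (C * v + norm b*T) * norm (y - x) / (m * v)"
        using um mpos vpos C0 t by (intro divide_left_mono mult_nonneg_nonneg mult_right_mono) auto
      finally show ?thesis by simp
    qed
    ultimately show "\<exists>U B. open U \<and> x \<in> U \<and> (\<forall>y\<in>S \<inter> U. norm (g p y - g p x) \<le> B * norm (y - x))"
      by blast
  qed
  have negB: "negligible (\<Union>p\<in>F. g p ` S)"
    using fin negp by (intro negligible_Union) auto
  have "\<not> ball 0 \<rho> \<subseteq> (\<Union>p\<in>F. g p ` S)"
    using negligible_subset[OF negB] open_not_negligible[of "ball (0::complex) \<rho>"] \<rho> by auto
  then obtain c where c: "c \<in> ball 0 \<rho>" "c \<notin> (\<Union>p\<in>F. g p ` S)" by blast
  show ?thesis
  proof (rule that)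
    show "norm c < \<rho>" using c by simp
    fix t assume t: "t \<in> {0<..<T}"
    show "\<gamma> t + c * of_real (t*(T-t)) \<notin> F"
    proof
      assume p: "\<gamma> t + c * of_real (t*(T-t)) \<in> F"
      have "of_real t \<in> S" using t by (simp add: S_def)
      moreover have "c = g (\<gamma> t + c * of_real (t*(T-t))) (of_real t)"
        using t by (simp add: g_def)
      ultimately show False using c p by blast
    qed
  qed
qed

lemma chain_mono:
  fixes t :: "nat \<Rightarrow> real"
  assumes "\<forall>i<n. t i \<le> t (Suc i)" "i \<le> j" "j \<le> n"
  shows "t i \<le> t j"
  using assms(2,3)
proof (induction j)
  case 0 then show ?case by simp
next
  case (Suc j)
  show ?case
  proof (cases "i = Suc j")
    case False
    then have "t i \<le> t j" using Suc by simp
    also have "t j \<le> t (Suc j)" using assms(1) Suc.prems by simp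
    finally show ?thesis .
  qed simp
qed

lemma lip_sum:
  fixes g :: "real \<Rightarrow> 'a::real_normed_vector"
  assumes lip: "L-lipschitz_on {0..T} g" and t: "t 0 = 0" "t n = T" "\<forall>i<n. t i \<le> t (Suc i)"
  shows "(\<Sum>i<n. norm (g (t (Suc i)) - g (t i))) \<le> L * T"
proof -
  have mem: "t i \<in> {0..T}" if "i \<le> n" for i
    using chain_mono[OF t(3), of 0 i] chain_mono[OF t(3), of i n] that t by auto
  have "(\<Sum>i<n. norm (g (t (Suc i)) - g (t i))) \<le> (\<Sum>i<n. L * (t (Suc i) - t i))"
  proof (rule sum_mono)
    fix i assume "i \<in> {..<n}"
    then have i: "i < n" by simp
    have "dist (g (t (Suc i))) (g (t i)) \<le> L * dist (t (Suc i)) (t i)"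
      using lipschitz_onD[OF lip mem mem] i by simp
    then show "norm (g (t (Suc i)) - g (t i)) \<le> L * (t (Suc i) - t i)"
      using t(3) i by (simp add: dist_norm dist_real_def)
  qed
  also have "\<dots> = L * T"
    by (simp add: sum_distrib_left[symmetric] sum_lessThan_telescope t)
  finally show ?thesis .
qed

lemma len_pert:
  fixes \<gamma> h :: "real \<Rightarrow> complex"
  assumes lg: "C-lipschitz_on {0..T} \<gamma>" and lh: "L-lipschitz_on {0..T} h" and T0: "0 \<le> T"
  shows "path_len (\<lambda>t. \<gamma> t + h t) T \<le> path_len \<gamma> T + L * T"
proof -
  define P where "P = {(n, t). (n::nat) > 0 \<and> t 0 = (0::real) \<and> t n = T \<and> (\<forall>i<n. t i \<le> t (Suc i))}"
  have ne: "P \<noteq> {}"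
  proof -
    have "(1, \<lambda>i::nat. if i = 0 then 0 else T) \<in> P" using T0 by (simp add: P_def)
    then show ?thesis by blast
  qed
  have bdd: "bdd_above ((\<lambda>p. \<Sum>i<fst p. norm (\<gamma> (snd p (Suc i)) - \<gamma> (snd p i))) ` P)"
  proof (rule bdd_aboveI2[where M="C * T"])
    fix p assume "p \<in> P"
    then obtain n t where "p = (n, t)" "t 0 = 0" "t n = T" "\<forall>i<n. t i \<le> t (Suc i)"
      by (auto simp: P_def)
    then show "(\<Sum>i<fst p. norm (\<gamma> (snd p (Suc i)) - \<gamma> (snd p i))) \<le> C * T"
      using lip_sum[OF lg] by simp
  qed
  have "path_len (\<lambda>t. \<gamma> t + h t) T = (SUP p\<in>P. \<Sum>i<fst p. norm ((\<gamma> (snd p (Suc i)) + h (snd p (Suc i))) - (\<gamma> (snd p i) + h (snd p i))))"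
    by (simp add: path_len_def P_def)
  also have "\<dots> \<le> path_len \<gamma> T + L * T"
  proof (rule cSUP_least[OF ne])
    fix p assume p: "p \<in> P"
    obtain n t where nt: "p = (n, t)" by (cases p)
    have t: "t 0 = 0" "t n = T" "\<forall>i<n. t i \<le> t (Suc i)" using p nt by (auto simp: P_def)
    have "(\<Sum>i<n. norm ((\<gamma> (t (Suc i)) + h (t (Suc i))) - (\<gamma> (t i) + h (t i))))
        \<le> (\<Sum>i<n. norm (\<gamma> (t (Suc i)) - \<gamma> (t i)) + norm (h (t (Suc i)) - h (t i)))"
    proof (rule sum_mono)
      fix i
      have "(\<gamma> (t (Suc i)) + h (t (Suc i))) - (\<gamma> (t i) + h (t i)) = (\<gamma> (t (Suc i)) - \<gamma> (t i)) + (h (t (Suc i)) - h (t i))"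
        by simp
      then show "norm ((\<gamma> (t (Suc i)) + h (t (Suc i))) - (\<gamma> (t i) + h (t i)))
          \<le> norm (\<gamma> (t (Suc i)) - \<gamma> (t i)) + norm (h (t (Suc i)) - h (t i))"
        by (metis norm_triangle_ineq)
    qed
    also have "\<dots> = (\<Sum>i<n. norm (\<gamma> (t (Suc i)) - \<gamma> (t i))) + (\<Sum>i<n. norm (h (t (Suc i)) - h (t i)))"
      by (simp add: sum.distrib)
    also have "\<dots> \<le> path_len \<gamma> T + L * T"
    proof (rule add_mono)
      have "(\<Sum>i<fst p. norm (\<gamma> (snd p (Suc i)) - \<gamma> (snd p i))) \<le> (SUP p\<in>P. \<Sum>i<fst p. norm (\<gamma> (snd p (Suc i)) - \<gamma> (snd p i)))"
        by (rule cSUP_upper[OF p bdd])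
      then show "(\<Sum>i<n. norm (\<gamma> (t (Suc i)) - \<gamma> (t i))) \<le> path_len \<gamma> T"
        by (simp add: nt path_len_def P_def)
      show "(\<Sum>i<n. norm (h (t (Suc i)) - h (t i))) \<le> L * T" by (rule lip_sum[OF lh t])
    qed
    finally show "(\<Sum>i<fst p. norm ((\<gamma> (snd p (Suc i)) + h (snd p (Suc i))) - (\<gamma> (snd p i) + h (snd p i)))) \<le> path_len \<gamma> T + L * T"
      by (simp add: nt)
  qed
  finally show ?thesis .
qed

theorem lemma2p14:
  fixes \<phi> \<psi> :: "complex \<Rightarrow> complex" and \<gamma> :: "real \<Rightarrow> complex" and T :: real
    and F :: "complex set" and \<epsilon> :: real
  assumes "\<exists>\<rho>>0. \<phi> holomorphic_on ball 0 \<rho>"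
    and "in_Pi \<gamma> T"
    and "ac_along \<phi> \<gamma> T \<psi>"
    and "finite F"
    and "\<epsilon> > 0"
  shows "\<exists>\<gamma>'. in_Pi \<gamma>' T \<and> \<gamma>' ` {0<..<T} \<subseteq> - F \<and> path_len \<gamma>' T < path_len \<gamma> T + \<epsilon> \<and>
           \<gamma>' T = \<gamma> T \<and> ac_along \<phi> \<gamma>' T \<psi>"
proof -
  obtain C where T0: "0 \<le> T" and lip: "C-lipschitz_on {0..T} \<gamma>" and g0: "\<gamma> 0 = 0"
    using assms(2) unfolding in_Pi_def by blast
  have cont: "continuous_on {0..T} \<gamma>" using lip by (rule lipschitz_on_continuous_on)
  obtain \<eta> where \<eta>: "\<eta> > 0" and stb: "\<And>\<gamma>'. continuous_on {0..T} \<gamma>' \<Longrightarrow> \<gamma>' 0 = \<gamma> 0 \<Longrightarrow> \<gamma>' T = \<gamma> T \<Longrightarrow>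
     (\<forall>s\<in>{0..T}. norm (\<gamma>' s - \<gamma> s) < \<eta>) \<Longrightarrow> ac_along \<phi> \<gamma>' T \<psi>"
    using stab[OF assms(3) T0 cont] by blast
  define \<rho> where "\<rho> = min \<eta> \<epsilon> / (T*T + 1)"
  have TT: "0 < T*T + 1" using zero_le_square[of T] by linarith
  have \<rho>: "\<rho> > 0" using \<eta> assms(5) TT by (simp add: \<rho>_def)
  obtain c where c: "norm c < \<rho>" and avF: "\<And>t. t \<in> {0<..<T} \<Longrightarrow> \<gamma> t + c * of_real (t*(T-t)) \<notin> F"
    using avoid[OF lip assms(4) \<rho>] by blast
  have cbound: "norm c * (T*T) < min \<eta> \<epsilon>"
  proof -
    have "norm c * (T*T) \<le> norm c * (T*T + 1)" by (simp add: mult_left_mono)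
    also have "\<dots> < \<rho> * (T*T + 1)" using c using TT by (intro mult_strict_right_mono) auto
    also have "\<dots> = min \<eta> \<epsilon>" unfolding \<rho>_def using TT by simp
    finally show ?thesis .
  qed
  define h where "h t = c * of_real (t*(T-t))" for t
  have lh: "(norm c * T)-lipschitz_on {0..T} h"
  proof (rule lipschitz_onI)
    show "0 \<le> norm c * T" using T0 by simp
    fix x y assume x: "x \<in> {0..T}" and y: "y \<in> {0..T}"
    have "x*(T-x) - y*(T-y) = (x - y) * (T - x - y)" by (simp add: algebra_simps)
    then have "\<bar>x*(T-x) - y*(T-y)\<bar> = \<bar>x - y\<bar> * \<bar>T - x - y\<bar>" by (simp add: abs_mult)
    also have "\<dots> \<le> \<bar>x - y\<bar> * T" using x y by (intro mult_left_mono) auto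
    finally have *: "\<bar>x*(T-x) - y*(T-y)\<bar> \<le> T * \<bar>x - y\<bar>" by (simp add: mult.commute)
    have "dist (h x) (h y) = norm c * \<bar>x*(T-x) - y*(T-y)\<bar>"
    proof -
      have "h x - h y = c * of_real (x*(T-x) - y*(T-y))" unfolding h_def
        by (simp only: of_real_diff right_diff_distrib)
      then show ?thesis unfolding dist_norm by (simp only: norm_mult norm_of_real)
    qed
    also have "\<dots> \<le> norm c * (T * \<bar>x - y\<bar>)" using * by (intro mult_left_mono) auto
    finally show "dist (h x) (h y) \<le> norm c * T * dist x y" by (simp add: dist_real_def mult.assoc)
  qed
  define \<gamma>' where "\<gamma>' t = \<gamma> t + h t" for t
  have lip': "(C + norm c * T)-lipschitz_on {0..T} \<gamma>'"
    unfolding \<gamma>'_def by (rule lipschitz_on_add[OF lip lh])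
  show ?thesis
  proof (intro exI[of _ \<gamma>'] conjI)
    show "in_Pi \<gamma>' T" unfolding in_Pi_def using T0 lip' g0 by (auto simp: \<gamma>'_def h_def)
    show "\<gamma>' ` {0<..<T} \<subseteq> - F" using avF by (auto simp: \<gamma>'_def h_def)
    have "path_len \<gamma>' T \<le> path_len \<gamma> T + norm c * T * T"
      unfolding \<gamma>'_def by (rule len_pert[OF lip lh T0])
    also have "\<dots> < path_len \<gamma> T + \<epsilon>" using cbound by (simp add: mult.assoc)
    finally show "path_len \<gamma>' T < path_len \<gamma> T + \<epsilon>" .
    show "\<gamma>' T = \<gamma> T" by (simp add: \<gamma>'_def h_def)
    show "ac_along \<phi> \<gamma>' T \<psi>"
    proof (rule stb)
      show "continuous_on {0..T} \<gamma>'" using lip' by (rule lipschitz_on_continuous_on)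
      show "\<gamma>' 0 = \<gamma> 0" "\<gamma>' T = \<gamma> T" by (simp_all add: \<gamma>'_def h_def)
      show "\<forall>s\<in>{0..T}. norm (\<gamma>' s - \<gamma> s) < \<eta>"
      proof
        fix s assume s: "s \<in> {0..T}"
        have "norm (\<gamma>' s - \<gamma> s) = norm c * \<bar>s*(T-s)\<bar>" by (simp only: \<gamma>'_def h_def add_diff_cancel_left' norm_mult norm_of_real)
        also have "\<dots> \<le> norm c * (T*T)"
          using s by (intro mult_left_mono) (auto intro: mult_mono)
        also have "\<dots> < \<eta>" using cbound by simp
        finally show "norm (\<gamma>' s - \<gamma> s) < \<eta>" .
      qed
    qed
  qed
qed

end
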